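(* Let $F$ be a cellular automaton on $A^{\mathbb N}$. Then $\mathfrak d_L(F(x),x)=0$ for all $x\in A^{\mathbb N}$ if and only if there exists $k\in\mathbb N$ such that $F=\sigma^k$.
   Context: $A$ is a finite alphabet; $\sigma(x)_i=x_{i+1}$; $x_{[i,j)}=x_i\cdots x_{j-1}$. A cellular automaton with diameter $\delta\ge1$ is $F(x)_i=f(x_{[i,i+\delta)})$ for a local rule $f:A^\delta\to A$. The Levenshtein distance is $d_L(u,v)=\frac{|u|+|v|}{2}-\ell$, $\ell$ the length of a longest common subsequence of $u,v$; the Feldman pseudo-metric is $\mathfrak d_L(x,y)=\limsup_{l\to\infty}d_L(x_{[0,l)},y_{[0,l)})/l$. *)

theory Defs
  imports Complex_Main "HOL-Library.Sublist" "HOL-Library.Liminf_Limsup" "HOL-Library.Extended_Real"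
begin

definition shift :: "(nat \<Rightarrow> 'a) \<Rightarrow> (nat \<Rightarrow> 'a)" where
  "shift x = (\<lambda>i. x (Suc i))"

definition is_CA :: "((nat \<Rightarrow> 'a::finite) \<Rightarrow> (nat \<Rightarrow> 'a)) \<Rightarrow> bool" where
  "is_CA F \<longleftrightarrow> (\<exists>(\<delta>::nat) (f :: 'a list \<Rightarrow> 'a). \<delta> \<ge> 1 \<and>
      (\<forall>x i. F x i = f (map x [i..<i+\<delta>])))"

definition prefix_word :: "(nat \<Rightarrow> 'a) \<Rightarrow> nat \<Rightarrow> 'a list" where
  "prefix_word x l = map x [0..<l]"

definition lcs_len :: "'a list \<Rightarrow> 'a list \<Rightarrow> nat" where
  "lcs_len u v = Max {length w | w. subseq w u \<and> subseq w v}"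

definition lev_dist :: "'a list \<Rightarrow> 'a list \<Rightarrow> real" where
  "lev_dist u v = (real (length u) + real (length v)) / 2 - real (lcs_len u v)"

definition feldman :: "(nat \<Rightarrow> 'a) \<Rightarrow> (nat \<Rightarrow> 'a) \<Rightarrow> ereal" where
  "feldman x y = limsup (\<lambda>l. ereal (lev_dist (prefix_word x l) (prefix_word y l) / real l))"

end

theory Submission
  imports Defs
begin

definition ncf :: "nat \<Rightarrow> 'a list \<Rightarrow> 'a list \<Rightarrow> bool" where
  "ncf p U V \<longleftrightarrow> \<not>(\<exists>g. length g = p \<and> sublist g U \<and> sublist g V)"

lemma ncf_z: assumes "ncf p (z@u) (z@v)" shows "length z < p"
proof (rule ccontr)
  assume "\<not> length z < p"
  hence "length (take p z) = p" by simp
  moreover have "sublist (take p z) (z@u)" "sublist (take p z) (z@v)"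
    by (meson sublist_append_rightI sublist_order.order_trans sublist_take)+
  ultimately show False using assms unfolding ncf_def by blast
qed

lemma ncf_tl1: assumes "ncf p (z@u) V" shows "ncf p u V"
  using assms unfolding ncf_def
  using sublist_order.order_trans[OF _ sublist_append_leftI] by blast

lemma ncf_tl2: assumes "ncf p U (z@u)" shows "ncf p U u"
  using assms unfolding ncf_def
  using sublist_order.order_trans[OF _ sublist_append_leftI] by blast

lemma runs:
  assumes "ncf p (z@u) (z@v)" "subseq w u" "subseq w v"
  shows "length z + length w \<le> (p-1) * (1 + length u + length v - 2*length w)"
  using assms
proof (induction "length u + length v" arbitrary: u v w z rule: less_induct)
  case less
  have lz: "length z \<le> p - 1" using ncf_z[OF less.prems(1)] by simp
  have lw: "length w \<le> length u" "length w \<le> length v"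
    using less.prems(2,3) list_emb_length by blast+
  have base: "p - 1 \<le> (p-1) * (1 + length u + length v - 2*length w)"
  proof -
    have "1 \<le> 1 + length u + length v - 2*length w" using lw by simp
    then show ?thesis by (metis mult.right_neutral mult_le_mono2)
  qed
  show ?case
  proof (cases "w = [] \<or> u = [] \<or> v = []")
    case True
    then have "w = []" using less.prems(2,3) by auto
    then show ?thesis using lz base by simp
  next
    case False
    then obtain c w' a u' b v' where eqs: "w = c#w'" "u = a#u'" "v = b#v'"
      by (meson neq_Nil_conv)
    show ?thesis
    proof (cases "c = a \<and> c = b")
      case True
      have "ncf p ((z@[a])@u') ((z@[a])@v')" using less.prems(1) eqs True by (metis append.assoc append_Cons self_append_conv2)
      moreover have "subseq w' u'" "subseq w' v'" using less.prems(2,3) eqs True by auto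
      ultimately have "length (z@[a]) + length w' \<le> (p-1) * (1 + length u' + length v' - 2*length w')"
        using less.hyps[of u' v' "z@[a]" w'] eqs by auto
      moreover have "1 + length u + length v - 2*length w = 1 + length u' + length v' - 2*length w'"
        using eqs by simp
      ultimately show ?thesis using eqs by simp
    next
      case False
      then consider "c \<noteq> a" | "c \<noteq> b" by blast
      then show ?thesis
      proof cases
        case 1
        have s: "subseq w u'" using less.prems(2) eqs 1 by auto
        have "ncf p ([]@u') ([]@v)" using ncf_tl1[of p "z@[a]" u' "z@v"] ncf_tl2[of p u' z v] less.prems(1) eqs by simp
        then have "length ([]::'a list) + length w \<le> (p-1) * (1 + length u' + length v - 2*length w)"
          using less.hyps[of u' v "[]" w] eqs s less.prems(3) by auto
        moreover have lu': "length w \<le> length u'" using s list_emb_length by blast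
        moreover have "1 + length u + length v - 2*length w = (1 + length u' + length v - 2*length w) + 1"
          using eqs lu' lw by simp
        ultimately show ?thesis using lz by (simp add: algebra_simps)
      next
        case 2
        have s: "subseq w v'" using less.prems(3) eqs 2 by auto
        have "ncf p ([]@u) ([]@v')" using ncf_tl1[of p z u "z@v"] ncf_tl2[of p u "z@[b]" v'] less.prems(1) eqs by simp
        then have "length ([]::'a list) + length w \<le> (p-1) * (1 + length u + length v' - 2*length w)"
          using less.hyps[of u v' "[]" w] eqs s less.prems(2) by auto
        moreover have lv': "length w \<le> length v'" using s list_emb_length by blast
        moreover have "1 + length u + length v - 2*length w = (1 + length u + length v' - 2*length w) + 1"
          using eqs lv' lw by simp
        ultimately show ?thesis using lz by (simp add: algebra_simps)
      qed
    qed
  qed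
qed

lemma shift_pow: "(shift ^^ k) y i = y (i + k)"
  by (induction k arbitrary: i) (auto simp: shift_def)

lemma lcs_set_fin: "finite {length w | w. subseq w u \<and> subseq w v}"
  by (rule finite_subset[of _ "{..length u}"]) (auto dest: list_emb_length)

lemma lcs_ge: "subseq w u \<Longrightarrow> subseq w v \<Longrightarrow> length w \<le> lcs_len u v"
  unfolding lcs_len_def by (rule Max_ge[OF lcs_set_fin]) blast

lemma lcs_ex: "\<exists>w. subseq w u \<and> subseq w v \<and> length w = lcs_len u v"
proof -
  have "lcs_len u v \<in> {length w | w. subseq w u \<and> subseq w v}"
    unfolding lcs_len_def by (rule Max_in[OF lcs_set_fin]) auto
  then show ?thesis by auto
qed

lemma lcs_le: "lcs_len u v \<le> length u" "lcs_len u v \<le> length v"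
  using lcs_ex[of u v] list_emb_length by metis+

lemma prefix_word_len[simp]: "length (prefix_word x l) = l"
  by (simp add: prefix_word_def)

lemma backward: "feldman ((shift ^^ k) x) x = 0"
proof -
  define r where "r l = lev_dist (prefix_word ((shift ^^ k) x) l) (prefix_word x l) / real l" for l
  have b: "0 \<le> r l \<and> r l \<le> real k / real l" for l
  proof -
    let ?u = "prefix_word ((shift ^^ k) x) l" and ?v = "prefix_word x l"
    have "real l - real k \<le> real (lcs_len ?u ?v)"
    proof (cases "k \<le> l")
      case True
      have "?u = map x (map (\<lambda>i. i + k) [0..<l])"
        by (simp add: prefix_word_def shift_pow)
      also have "\<dots> = map x [k..<l+k]" by (simp only: map_add_upt)
      also have "[k..<l+k] = [k..<l] @ [l..<l+k]" using upt_add_eq_append[OF True, of k] by simp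
      finally have u: "?u = map x [k..<l] @ map x [l..<l+k]" by simp
      have "[0..<l] = [0..<k] @ [k..<k+(l-k)]" using upt_add_eq_append[of 0 k "l-k"] True by simp
      then have v: "?v = map x [0..<k] @ map x [k..<l]"
        using True by (simp add: prefix_word_def)
      have "length (map x [k..<l]) \<le> lcs_len ?u ?v"
        by (rule lcs_ge) (simp_all only: u v list_emb_append2 list_emb_prefix list_emb_refl)
      then show ?thesis using True by simp
    qed simp
    then have "lev_dist ?u ?v \<le> real k" unfolding lev_dist_def by simp
    moreover have "0 \<le> lev_dist ?u ?v" using lcs_le[of ?u ?v] unfolding lev_dist_def by simp
    ultimately show ?thesis unfolding r_def by (simp add: divide_right_mono)
  qed
  have "r \<longlonglongrightarrow> 0"
    by (rule real_tendsto_sandwich[of "\<lambda>_. 0" _ _ "\<lambda>l. real k / real l"])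
       (use b in \<open>auto intro: lim_const_over_n\<close>)
  then have "(\<lambda>l. ereal (r l)) \<longlonglongrightarrow> ereal 0" by simp
  then have "limsup (\<lambda>l. ereal (r l)) = ereal 0"
    by (intro lim_imp_Limsup) simp_all
  moreover have "feldman ((shift ^^ k) x) x = limsup (\<lambda>l. ereal (r l))"
    unfolding feldman_def r_def by simp
  ultimately show ?thesis by (simp add: zero_ereal_def)
qed

lemma arith_aux:
  fixes P L l :: real
  assumes "L \<le> (P-1)*(1+2*l-2*L)" "P \<ge> 1" "l \<ge> 2*P" "L \<le> l"
  shows "l \<le> 4*P*(l - L)"
proof -
  define e where "e = l - L"
  have "l - e \<le> (P-1)*(1+2*e)" using assms(1) unfolding e_def by (simp add: algebra_simps)
  then have "l \<le> P - 1 + e*(2*P-1)" by (simp add: algebra_simps)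
  also have "\<dots> \<le> P - 1 + 2*P*e" using assms(4) unfolding e_def by (simp add: algebra_simps)
  finally have "l/2 + 1 \<le> 2*P*e" using assms(3) by linarith
  then show ?thesis unfolding e_def by linarith
qed

lemma lower:
  assumes p: "0 < p" and nc: "\<forall>l. ncf p (prefix_word y l) (prefix_word x l)"
  shows "feldman y x \<noteq> 0"
proof -
  have ev: "ereal (1 / (4*real p)) \<le> ereal (lev_dist (prefix_word y l) (prefix_word x l) / real l)"
    if l: "l \<ge> 2*p" for l
  proof -
    let ?u = "prefix_word y l" and ?v = "prefix_word x l"
    obtain w where w: "subseq w ?u" "subseq w ?v" "length w = lcs_len ?u ?v" using lcs_ex by blast
    have "length ([]::'a list) + length w \<le> (p-1) * (1 + length ?u + length ?v - 2*length w)"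
      by (rule runs) (use nc w in auto)
    then have n1: "lcs_len ?u ?v \<le> (p-1) * (1 + 2*l - 2*lcs_len ?u ?v)" using w(3) by (simp add: mult_2)
    have Ll: "lcs_len ?u ?v \<le> l" using lcs_le[of ?u ?v] by simp
    then have "real (lcs_len ?u ?v) \<le> (real p - 1) * (1 + 2*real l - 2*real (lcs_len ?u ?v))"
    proof -
      have "real (lcs_len ?u ?v) \<le> real ((p-1) * (1 + 2*l - 2*lcs_len ?u ?v))"
        using n1 by (simp only: of_nat_le_iff)
      also have "\<dots> = real (p-1) * real (1 + 2*l - 2*lcs_len ?u ?v)" by (simp only: of_nat_mult)
      also have "real (1 + 2*l - 2*lcs_len ?u ?v) = 1 + 2*real l - 2*real (lcs_len ?u ?v)"
        using Ll by (simp add: of_nat_diff)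
      also have "real (p-1) = real p - 1" using p by (simp add: of_nat_diff)
      finally show ?thesis .
    qed
    then have "real l \<le> 4*real p*(real l - real (lcs_len ?u ?v))"
      by (intro arith_aux) (use p l Ll in auto)
    moreover have "lev_dist ?u ?v = real l - real (lcs_len ?u ?v)" unfolding lev_dist_def by simp
    ultimately have "real l / real l \<le> 4*real p * lev_dist ?u ?v / real l"
      by (simp add: divide_right_mono)
    moreover have "real l / real l = 1" using l p by simp
    ultimately have "1 \<le> 4*real p * (lev_dist ?u ?v / real l)" by simp
    then have "1/(4*real p) \<le> lev_dist ?u ?v / real l" using p
      by (simp add: field_simps)
    then show ?thesis by simp
  qed
  have "ereal (1 / (4*real p)) \<le> feldman y x" unfolding feldman_def
    by (rule le_Limsup) (use ev in \<open>auto simp: eventually_sequentially\<close>)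
  moreover have "0 < 1 / (4*real p)" using p by simp
  ultimately show ?thesis by auto
qed

lemma periodic_add: fixes g :: "nat \<Rightarrow> 'b" and p k :: nat assumes "\<And>a. g (a + p) = g a" shows "g (a + k*p) = g a"
proof (induction k)
  case (Suc k)
  have "g (a + Suc k * p) = g ((a + k*p) + p)" by (simp add: algebra_simps)
  then show ?case using Suc assms by simp
qed simp

lemma periodic_mod: fixes g :: "nat \<Rightarrow> 'b" and p :: nat assumes "\<And>a. g (a + p) = g a" shows "g a = g (a mod p)"
  using periodic_add[of g p "a mod p" "a div p", OF assms] by (simp add: mod_div_mult_eq del: mod_div_mult_eq)

lemma sublist_map_upt:
  assumes "sublist g (map h [0..<l])"
  shows "\<exists>j. j + length g \<le> l \<and> (\<forall>t<length g. g!t = h (j+t))"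
proof -
  obtain ps ss where e: "map h [0..<l] = ps @ g @ ss" using assms unfolding sublist_def by blast
  have len: "l = length ps + length g + length ss" using arg_cong[OF e, of length] by simp
  have "g!t = h (length ps + t)" if "t < length g" for t
  proof -
    have "(ps @ g @ ss) ! (length ps + t) = g ! t" using that by (simp add: nth_append)
    moreover have "map h [0..<l] ! (length ps + t) = h (length ps + t)" using that len by simp
    ultimately show ?thesis using e by simp
  qed
  then show ?thesis using len by (intro exI[of _ "length ps"]) auto
qed

lemma shift_from_factor:
  fixes g1 g2 :: "nat \<Rightarrow> 'b" and p i j :: nat
  assumes p: "0 < p" and g1: "\<And>a. g1 (a + p) = g1 a" and g2: "\<And>a. g2 (a + p) = g2 a"
    and eq: "\<forall>t<p. g1 (j+t) = g2 (i+t)"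
  shows "\<exists>m<p. \<forall>s. g1 s = g2 (s+m)"
proof -
  have all: "g1 (j+t) = g2 (i+t)" for t
  proof -
    have "g1 (j+t) = g1 (j + t mod p + (t div p)*p)" by (simp add: mod_div_mult_eq add.assoc)
    also have "\<dots> = g1 (j + t mod p)" by (rule periodic_add[of g1 p, OF g1])
    also have "\<dots> = g2 (i + t mod p)" using eq p by simp
    also have "\<dots> = g2 (i + t mod p + (t div p)*p)" by (rule periodic_add[of g2 p, OF g2, symmetric])
    also have "\<dots> = g2 (i+t)" by (simp add: mod_div_mult_eq add.assoc)
    finally show ?thesis .
  qed
  define m where "m = (i + j*p - j) mod p"
  have jp: "j \<le> j*p" using p by (simp add: Suc_leI)
  have "g1 s = g2 (s+m)" for s
  proof -
    have e1: "s + j*p = j + (s + j*p - j)" using jp by linarith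
    have e2: "i + (s + j*p - j) = s + (i + j*p - j)" using jp by linarith
    have e3: "(s + (i + j*p - j)) mod p = (s + m) mod p" unfolding m_def by (simp add: mod_add_right_eq)
    have "g1 s = g1 (s + j*p)" by (rule periodic_add[of g1 p, OF g1, symmetric])
    also have "\<dots> = g1 (j + (s + j*p - j))" using e1 by simp
    also have "\<dots> = g2 (i + (s + j*p - j))" by (rule all)
    also have "\<dots> = g2 (s + (i + j*p - j))" using e2 by simp
    also have "\<dots> = g2 ((s + (i + j*p - j)) mod p)" by (rule periodic_mod[of g2 p, OF g2])
    also have "\<dots> = g2 ((s + m) mod p)" using e3 by simp
    also have "\<dots> = g2 (s+m)" by (rule periodic_mod[of g2 p, OF g2, symmetric])
    finally show ?thesis .
  qed
  moreover have "m < p" unfolding m_def using p by simp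
  ultimately show ?thesis by blast
qed

lemma key:
  fixes f :: "'a list \<Rightarrow> 'a" and F :: "(nat \<Rightarrow> 'a) \<Rightarrow> nat \<Rightarrow> 'a"
  assumes Fdef: "\<And>y i. F y i = f (map y [i..<i+\<delta>])" and d1: "\<delta> \<ge> 1" and cd: "c \<noteq> d"
  and W: "\<And>u. length u = \<delta> \<Longrightarrow> \<exists>pre suf. W = pre @ u @ suf"
  and P: "P = (d # W @ [d]) @ replicate n c" and n: "n = length W + 2 + 2*\<delta>"
  and x: "x = (\<lambda>i. P ! (i mod length P))"
  and m: "m < length P" and Fm: "\<And>s. F x s = x (s+m)"
  shows "F = shift ^^ m"
proof -
  define K where "K = length W + 2"
  define p where "p = length P"
  have p: "p = K + n" unfolding p_def K_def P by simp
  have xlt: "k < p \<Longrightarrow> x k = P ! k" for k unfolding x p_def by simp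
  have xp: "x (k + p) = x k" for k unfolding x p_def by simp
  have x0: "x 0 = d" using xlt[of 0] p P unfolding K_def by simp
  have xK1: "x (K-1) = d" using xlt[of "K-1"] p P unfolding K_def by (simp add: nth_append)
  have xc: "K \<le> k \<Longrightarrow> k < p \<Longrightarrow> x k = c" for k
  proof -
    assume a: "K \<le> k" "k < p"
    have "P ! k = replicate n c ! (k - K)"
      using nth_append[of "d#W@[d]" "replicate n c" k] a unfolding P K_def by simp
    then show ?thesis using xlt[of k] a p by simp
  qed
  define e where "e = f (replicate \<delta> c)"
  have win: "x (s+m) = e" if "K \<le> s" "s + \<delta> \<le> p" for s
  proof -
    have "map x [s..<s+\<delta>] = replicate \<delta> c"
      by (rule nth_equalityI) (use that xc in auto)
    then show ?thesis using Fm[of s] Fdef[of x s] unfolding e_def by simp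
  qed
  have mlt: "m < \<delta>"
  proof (cases "m \<le> n - \<delta>")
    case True
    have "x (K+m) = e" using win[of K] True n d1 p by simp
    moreover have "x (K+m) = c" using xc[of "K+m"] True p n d1 by simp
    ultimately have ec: "e = c" by simp
    show ?thesis
    proof (rule ccontr)
      assume "\<not> m < \<delta>"
      then have "x (p - m + m) = e" using win[of "p-m"] True p n by simp
      moreover have "x (p - m + m) = d" using x0 xp[of 0] m p_def by simp
      ultimately show False using ec cd by simp
    qed
  next
    case False
    have "x ((p + K - m) + m) = e" using win[of "p+K-m"] False m p_def p n K_def by simp
    moreover have "x ((p + K - m) + m) = c" using m p_def xp[of K] xc[of K] p n by (simp add: add.commute)
    moreover have "x ((p + K - 1 - m) + m) = e" using win[of "p+K-1-m"] False m p_def p n K_def by simp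
    moreover have "x ((p + K - 1 - m) + m) = d" using m p_def xp[of "K-1"] xK1 p n K_def
      by (simp add: add.commute)
    ultimately show ?thesis using cd by simp
  qed
  have fu: "f u = u ! m" if u: "length u = \<delta>" for u
  proof -
    obtain pre suf where Wd: "W = pre @ u @ suf" using W[OF u] by blast
    define t where "t = Suc (length pre)"
    have lenW: "length W = length pre + \<delta> + length suf" using Wd u by simp
    have xu: "x (t + i) = u ! i" if "i < \<delta>" for i
    proof -
      have "t + i < p" using that p lenW unfolding t_def K_def by simp
      then have "x (t+i) = P ! (t+i)" by (rule xlt)
      also have "\<dots> = u ! i" using that u unfolding P Wd t_def by (simp add: nth_append)
      finally show ?thesis .
    qed
    have "map x [t..<t+\<delta>] = u" by (rule nth_equalityI) (use u xu in auto)
    then have "F x t = f u" using Fdef[of x t] by simp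
    then show ?thesis using Fm[of t] xu[OF mlt] by simp
  qed
  show ?thesis
  proof (intro ext)
    fix y i
    have "F y i = map y [i..<i+\<delta>] ! m" using Fdef[of y i] fu[of "map y [i..<i+\<delta>]"] by simp
    also have "\<dots> = y (i+m)" using mlt by simp
    finally show "F y i = (shift ^^ m) y i" by (simp add: shift_pow)
  qed
qed

theorem mainTheorem10:
  fixes F :: "(nat \<Rightarrow> 'a::finite) \<Rightarrow> (nat \<Rightarrow> 'a)"
  assumes "is_CA F"
  shows "(\<forall>x. feldman (F x) x = 0) \<longleftrightarrow> (\<exists>k::nat. F = shift ^^ k)"
proof
  assume "\<exists>k::nat. F = shift ^^ k"
  then show "\<forall>x. feldman (F x) x = 0" using backward by blast
next
  assume H: "\<forall>x. feldman (F x) x = 0"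
  show "\<exists>k::nat. F = shift ^^ k"
  proof (rule ccontr)
    assume nk: "\<not> (\<exists>k::nat. F = shift ^^ k)"
    obtain \<delta> f where d1: "\<delta> \<ge> 1" and Fdef: "\<And>y i. F y i = f (map y [i..<i+\<delta>])"
      using assms unfolding is_CA_def by auto
    show False
    proof (cases "\<exists>c d::'a. c \<noteq> d")
      case False
      then have "F = shift ^^ 0" by (auto intro!: ext)
      then show False using nk by blast
    next
      case True
      then obtain c d :: 'a where cd: "c \<noteq> d" by blast
      obtain all :: "'a list" where all: "set all = UNIV" using finite_list[OF finite_UNIV] by blast
      define W where "W = concat (List.n_lists \<delta> all)"
      have Wp: "\<exists>pre suf. W = pre @ u @ suf" if "length u = \<delta>" for u
      proof -
        have "u \<in> set (List.n_lists \<delta> all)" using that all by (simp add: set_n_lists)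
        then obtain xs ys where "List.n_lists \<delta> all = xs @ u # ys" by (meson split_list)
        then have "W = concat xs @ u @ concat ys" unfolding W_def by simp
        then show ?thesis by blast
      qed
      define n where "n = length W + 2 + 2*\<delta>"
      define P where "P = (d # W @ [d]) @ replicate n c"
      define p where "p = length P"
      define x where "x = (\<lambda>i. P ! (i mod length P))"
      have p0: "0 < p" unfolding p_def P_def by simp
      have xper: "x (a + p) = x a" for a unfolding x_def p_def by simp
      have Fper: "F x (a + p) = F x a" for a
      proof -
        have "map x [a+p..<a+p+\<delta>] = map x [a..<a+\<delta>]"
          by (rule nth_equalityI) (simp_all, metis xper add.commute add.left_commute)
        then show ?thesis using Fdef[of x] by simp
      qed
      have nc: "\<forall>l. ncf p (prefix_word (F x) l) (prefix_word x l)"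
      proof (rule allI, rule ccontr)
        fix l assume "\<not> ncf p (prefix_word (F x) l) (prefix_word x l)"
        then obtain g where g: "length g = p" "sublist g (prefix_word (F x) l)" "sublist g (prefix_word x l)"
          unfolding ncf_def by blast
        obtain j where j: "\<forall>t<length g. g!t = F x (j+t)"
          using sublist_map_upt[of g "F x" l] g(2) unfolding prefix_word_def by blast
        obtain i where i: "\<forall>t<length g. g!t = x (i+t)"
          using sublist_map_upt[of g x l] g(3) unfolding prefix_word_def by blast
        have "\<forall>t<p. F x (j+t) = x (i+t)" using i j g(1) by metis
        then obtain m where m: "m < p" "\<forall>s. F x s = x (s+m)"
          using shift_from_factor[of p "F x" x j i] p0 Fper xper by blast
        have "F = shift ^^ m"
          by (rule key[of F f \<delta> c d W P n x m, OF Fdef d1 cd Wp P_def n_def x_def]) (use m p_def in auto)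
        then show False using nk by blast
      qed
      have "feldman (F x) x \<noteq> 0" by (rule lower[OF p0 nc])
      then show False using H by blast
    qed
  qed
qed

end
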